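(* Let $a\in\mathbb{Z}$, $0<\beta\leq2$, $T>0$, and let $L$ be the linear operator on functions on $\mathbb{T}^2$ given by $L\rho=-a\cos(ax_2)\,R_1^2\Lambda^\beta\rho$. If $\rho\in L^\infty(0,T;L^2(\mathbb{T}^2))$ is a solution of the initial value problem $\partial_t\rho=L\rho$, $\rho(\cdot,0)=0$, then $\rho(\cdot,t)=0$ for every $t\in(0,T)$.
   Context: $\Lambda=(-\Delta)^{1/2}$ and $R_1=\partial_{x_1}\Lambda^{-1}$ is a Riesz transform, so $R_1^2\Lambda^\beta$ is the Fourier multiplier on $\mathbb{T}^2$ with symbol $-k_1^2|\boldsymbol{k}|^{\beta-2}$. *)

theory Defs
  imports "HOL-Analysis.Analysis"
begin

text \<open>The torus T^2 is represented by the fundamental domain [0,2pi]^2;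
functions on T^2 are functions on real x real, only their values on the box matter.\<close>

definition torus_box :: "(real \<times> real) set" where
  "torus_box = {0..2*pi} \<times> {0..2*pi}"

definition fcoeff :: "(real \<times> real \<Rightarrow> real) \<Rightarrow> int \<times> int \<Rightarrow> complex" where
  "fcoeff f k = complex_of_real (1 / (4 * pi^2)) *
     set_lebesgue_integral lborel torus_box
       (\<lambda>x. complex_of_real (f x) *
              cis (- (real_of_int (fst k) * fst x + real_of_int (snd k) * snd x)))"

text \<open>Symbol of R_1^2 Lambda^beta: -k1^2 |k|^(beta-2) (zero at k = 0).\<close>
definition riesz_sym :: "real \<Rightarrow> int \<times> int \<Rightarrow> complex" where
  "riesz_sym \<beta> k = (if k = (0, 0) then 0 else
      complex_of_real (- ((real_of_int (fst k))\<^sup>2 *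
        (sqrt ((real_of_int (fst k))\<^sup>2 + (real_of_int (snd k))\<^sup>2)) powr (\<beta> - 2))))"

definition riesz_op_hat :: "real \<Rightarrow> (int \<times> int \<Rightarrow> complex) \<Rightarrow> int \<times> int \<Rightarrow> complex" where
  "riesz_op_hat \<beta> c k = riesz_sym \<beta> k * c k"

text \<open>Fourier coefficients of cos(a x2) g(x), given the coefficients c of g.\<close>
definition mult_cos_hat :: "int \<Rightarrow> (int \<times> int \<Rightarrow> complex) \<Rightarrow> int \<times> int \<Rightarrow> complex" where
  "mult_cos_hat a c k = (c (fst k, snd k - a) + c (fst k, snd k + a)) / 2"

definition L_hat :: "int \<Rightarrow> real \<Rightarrow> (int \<times> int \<Rightarrow> complex) \<Rightarrow> int \<times> int \<Rightarrow> complex" where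
  "L_hat a \<beta> c k = - of_int a * mult_cos_hat a (riesz_op_hat \<beta> c) k"

end

theory Submission
  imports Defs
begin


lemma riesz_sym_bound:
  assumes "\<beta> \<le> 2"
  shows "norm (riesz_sym \<beta> j) \<le> (real_of_int (fst j))\<^sup>2"
proof (cases "j = (0,0)")
  case True then show ?thesis by (simp add: riesz_sym_def)
next
  case False
  obtain j1 j2 where j: "j = (j1, j2)" by (cases j)
  have "(real_of_int j1)\<^sup>2 + (real_of_int j2)\<^sup>2 \<ge> 1"
  proof -
    have "j1 \<noteq> 0 \<or> j2 \<noteq> 0" using False j by auto
    then have "j1\<^sup>2 + j2\<^sup>2 \<ge> (1::int)"
      by (metis add.commute add_increasing int_one_le_iff_zero_less zero_le_power2 zero_less_power2)
    then have "real_of_int (j1\<^sup>2 + j2\<^sup>2) \<ge> 1" by linarith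
    then show ?thesis by simp
  qed
  then have r: "sqrt ((real_of_int j1)\<^sup>2 + (real_of_int j2)\<^sup>2) \<ge> 1" by simp
  have p: "sqrt ((real_of_int j1)\<^sup>2 + (real_of_int j2)\<^sup>2) powr (\<beta> - 2) \<le> 1"
    using powr_mono[of "\<beta> - 2" 0 "sqrt ((real_of_int j1)\<^sup>2 + (real_of_int j2)\<^sup>2)"] r assms by (auto split: if_splits)
  have "norm (riesz_sym \<beta> j) = (real_of_int j1)\<^sup>2 * sqrt ((real_of_int j1)\<^sup>2 + (real_of_int j2)\<^sup>2) powr (\<beta> - 2)"
    unfolding riesz_sym_def if_not_P[OF False] norm_of_real j by (simp add: norm_mult norm_power)
  also have "\<dots> \<le> (real_of_int j1)\<^sup>2" using p by (simp add: mult_left_le)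
  finally show ?thesis using j by simp
qed

lemma L_hat_bound:
  assumes "\<beta> \<le> 2" and X: "\<And>j. norm (c (k1, j)) \<le> X"
  shows "norm (L_hat a \<beta> c (k1, k2)) \<le> \<bar>real_of_int a\<bar> * (real_of_int k1)\<^sup>2 * X"
proof -
  have X0: "0 \<le> X" using X[of 0] norm_ge_zero order_trans by blast
  have b1: "norm (riesz_sym \<beta> (k1, k2 - a) * c (k1, k2 - a)) \<le> (real_of_int k1)\<^sup>2 * X"
    unfolding norm_mult using riesz_sym_bound[OF assms(1), of "(k1, k2 - a)"] X[of "k2 - a"]
    by (simp add: mult_mono')
  have b2: "norm (riesz_sym \<beta> (k1, k2 + a) * c (k1, k2 + a)) \<le> (real_of_int k1)\<^sup>2 * X"
    unfolding norm_mult using riesz_sym_bound[OF assms(1), of "(k1, k2 + a)"] X[of "k2 + a"]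
    by (simp add: mult_mono')
  have "norm (L_hat a \<beta> c (k1, k2)) = \<bar>real_of_int a\<bar> *
     norm (riesz_sym \<beta> (k1, k2 - a) * c (k1, k2 - a) + riesz_sym \<beta> (k1, k2 + a) * c (k1, k2 + a)) / 2"
    by (simp add: L_hat_def mult_cos_hat_def riesz_op_hat_def norm_mult norm_divide)
  also have "\<dots> \<le> \<bar>real_of_int a\<bar> * (2 * ((real_of_int k1)\<^sup>2 * X)) / 2"
    apply (intro divide_right_mono mult_left_mono)
    using norm_triangle_le[OF add_mono[OF b1 b2]] by (auto simp: mult.commute)
  finally show ?thesis by simp
qed

lemma ode_zero:
  fixes C :: "real \<Rightarrow> int \<times> int \<Rightarrow> complex"
  assumes beta: "\<beta> \<le> 2"
    and bnd: "\<forall>s\<in>{0..<T}. \<forall>k. norm (C s k) \<le> B"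
    and C0: "\<forall>k. C 0 k = 0"
    and eqn: "\<forall>k. \<forall>t\<in>{0<..<T}. C t k = set_lebesgue_integral lborel {0..t} (\<lambda>s. L_hat a \<beta> (C s) k)"
  shows "\<forall>t\<in>{0..<T}. \<forall>k. C t k = 0"
proof (intro ballI allI)
  fix t :: real and k :: "int \<times> int" assume t: "t \<in> {0..<T}"
  obtain k1 k2 where k: "k = (k1, k2)" by (cases k)
  define K where "K = \<bar>real_of_int a\<bar> * (real_of_int k1)\<^sup>2"
  have K0: "0 \<le> K" unfolding K_def by simp
  have B0: "0 \<le> B" using bnd t by (meson atLeastLessThan_iff norm_ge_zero order_trans)
  have claim: "\<forall>t\<in>{0..<T}. \<forall>j. norm (C t (k1, j)) \<le> B * (K * t) ^ n / fact n" for n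
  proof (induction n)
    case 0 then show ?case using bnd by simp
  next
    case (Suc n)
    show ?case
    proof (intro ballI allI)
      fix t j assume t: "t \<in> {0..<T}"
      show "norm (C t (k1, j)) \<le> B * (K * t) ^ Suc n / fact (Suc n)"
      proof (cases "t = 0")
        case True then show ?thesis using C0 B0 K0 by simp
      next
        case False
        then have tpos: "0 < t" using t by auto
        define g where "g s = indicator {0..t} s * (K * (B * (K * s) ^ n / fact n))" for s :: real
        have pw: "norm (indicator {0..t} s *\<^sub>R L_hat a \<beta> (C s) (k1, j)) \<le> g s" for s
        proof (cases "s \<in> {0..t}")
          case True
          then have "s \<in> {0..<T}" using t by auto
          then have "norm (L_hat a \<beta> (C s) (k1, j)) \<le> K * (B * (K * s) ^ n / fact n)"
          proof -
            have "\<And>j'. norm (C s (k1, j')) \<le> B * (K * s) ^ n / fact n"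
              using Suc.IH \<open>s \<in> {0..<T}\<close> by blast
            from L_hat_bound[of \<beta> "C s" k1 "B * (K * s) ^ n / fact n" a j, OF beta this]
            show ?thesis unfolding K_def[symmetric] .
          qed
          then show ?thesis using True by (simp add: g_def)
        qed (simp add: g_def)
        have gint: "integrable lborel g"
        proof -
          have "integrable lborel (\<lambda>s. (K * (B * (K * s) ^ n / fact n)) * indicator {0..t} s)"
            by (intro borel_integrable_atLeastAtMost) auto
          then show ?thesis unfolding g_def by (simp add: mult.commute)
        qed
        have gval: "integral\<^sup>L lborel g = B * (K * t) ^ Suc n / fact (Suc n)"
        proof -
          have "integral\<^sup>L lborel g = (K * B * K ^ n / fact n) * integral\<^sup>L lborel (\<lambda>s. s ^ n * indicator {0..t} s)"
          proof -
            have "g = (\<lambda>s. (K * B * K ^ n / fact n) * (s ^ n * indicator {0..t} s))"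
              unfolding g_def by (auto simp: power_mult_distrib mult_ac)
            then show ?thesis by (simp only: integral_mult_right_zero)
          qed
          also have "\<dots> = (K * B * K ^ n / fact n) * (t ^ Suc n / Suc n)"
            using integral_power[of 0 t n] tpos by simp
          also have "\<dots> = B * (K * t) ^ Suc n / fact (Suc n)"
            by (simp add: power_mult_distrib field_simps)
          finally show ?thesis .
        qed
        have "norm (C t (k1, j)) = norm (integral\<^sup>L lborel (\<lambda>s. indicator {0..t} s *\<^sub>R L_hat a \<beta> (C s) (k1, j)))"
          using eqn tpos t by (simp add: set_lebesgue_integral_def)
        also have "\<dots> \<le> integral\<^sup>L lborel (\<lambda>s. norm (indicator {0..t} s *\<^sub>R L_hat a \<beta> (C s) (k1, j)))"
          by (rule integral_norm_bound)
        also have "\<dots> \<le> integral\<^sup>L lborel g"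
        proof (cases "integrable lborel (\<lambda>s. norm (indicator {0..t} s *\<^sub>R L_hat a \<beta> (C s) (k1, j)))")
          case True
          then show ?thesis using gint pw by (intro integral_mono) auto
        next
          case False
          then have "integral\<^sup>L lborel (\<lambda>s. norm (indicator {0..t} s *\<^sub>R L_hat a \<beta> (C s) (k1, j))) = 0"
            by (simp add: not_integrable_integral_eq)
          moreover have "0 \<le> integral\<^sup>L lborel g"
            unfolding g_def using B0 K0 by (intro integral_nonneg_AE AE_I2) (auto simp: indicator_def)
          ultimately show ?thesis by simp
        qed
        finally show ?thesis using gval by simp
      qed
    qed
  qed
  have lim: "(\<lambda>n. B * (K * t) ^ n / fact n) \<longlonglongrightarrow> 0"
  proof -
    have "(\<lambda>n. inverse (fact n) * (K * t) ^ n) \<longlonglongrightarrow> 0"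
      by (rule summable_LIMSEQ_zero[OF summable_exp])
    then have "(\<lambda>n. B * (inverse (fact n) * (K * t) ^ n)) \<longlonglongrightarrow> 0"
      by (rule tendsto_mult_right_zero)
    then show ?thesis by (simp add: field_simps)
  qed
  have "norm (C t k) \<le> 0"
    using LIMSEQ_le_const[OF lim, of "norm (C t k)"] claim t k by auto
  then show "C t k = 0" by simp
qed



lemma torus_box_cbox: "torus_box = cbox (0,0) (2*pi, 2*pi)"
  by (simp add: torus_box_def cbox_Pair_eq)

lemma torus_box_compact: "compact torus_box"
  by (simp add: torus_box_cbox)

lemma torus_box_sets[measurable]: "torus_box \<in> sets lborel"
  by (simp add: torus_box_cbox)

lemma torus_box_sets'[measurable]: "torus_box \<in> sets borel"
  by (simp add: torus_box_cbox)

lemma cis_borel: "cis \<in> borel_measurable borel"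
proof -
  have "continuous_on UNIV cis" unfolding cis_conv_exp by (intro continuous_intros)
  then show ?thesis by (rule borel_measurable_continuous_onI)
qed

lemma cis_meas[measurable]: "g \<in> borel_measurable M \<Longrightarrow> (\<lambda>x. cis (g x)) \<in> borel_measurable M"
  using measurable_compose[OF _ cis_borel] by blast

lemma lin_meas[measurable]: "(\<lambda>x::real\<times>real. c1 * fst x + c2 * snd x) \<in> borel_measurable borel"
  by (intro borel_measurable_continuous_onI continuous_intros)

lemma torus_box_finite: "emeasure lborel torus_box < \<infinity>"
  unfolding torus_box_cbox by (rule emeasure_bounded_finite) (rule bounded_cbox)

lemma torus_box_ind_int: "integrable lborel (indicator torus_box :: real \<times> real \<Rightarrow> real)"
  using torus_box_finite by (intro integrable_real_indicator) auto

lemma coeff_bound: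
  fixes f :: "real \<times> real \<Rightarrow> real"
  assumes fm[measurable]: "f \<in> borel_measurable borel"
    and fi: "set_integrable lborel torus_box (\<lambda>x. (f x)^2)"
  shows "norm (fcoeff f k) \<le> (measure lborel torus_box + set_lebesgue_integral lborel torus_box (\<lambda>x. (f x)^2)) / (8*pi^2)"
proof -
  define g where "g x = indicator torus_box x *\<^sub>R (complex_of_real (f x) *
              cis (- (real_of_int (fst k) * fst x + real_of_int (snd k) * snd x)))" for x
  define w where "w x = indicator torus_box x * ((1 + (f x)^2) / 2)" for x
  have wint: "integrable lborel w"
  proof -
    have "integrable lborel (\<lambda>x. (indicator torus_box x + indicator torus_box x *\<^sub>R (f x)^2) / 2)"
      using torus_box_ind_int fi unfolding set_integrable_def by auto
    then show ?thesis unfolding w_def by (simp add: algebra_simps)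
  qed
  have ng: "norm (g x) \<le> w x" for x
  proof -
    have "\<bar>f x\<bar> \<le> (1 + (f x)^2) / 2"
    proof -
      have "0 \<le> (\<bar>f x\<bar> - 1)^2" by simp
      then have "0 \<le> \<bar>f x\<bar>^2 - 2 * \<bar>f x\<bar> + 1" by (simp add: power2_diff)
      then show ?thesis by simp
    qed
    then show ?thesis unfolding g_def w_def by (auto simp: norm_mult indicator_def)
  qed
  have gm: "g \<in> borel_measurable lborel" unfolding g_def using lin_meas[of "- real_of_int (fst k)" "- real_of_int (snd k)"] by simp
  have gnint: "integrable lborel (\<lambda>x. norm (g x))"
    using Bochner_Integration.integrable_bound[OF wint, of "\<lambda>x. norm (g x)"] gm ng
    by (auto intro!: AE_I2 simp: w_def indicator_def)
  have "norm (set_lebesgue_integral lborel torus_box (\<lambda>x. complex_of_real (f x) *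
              cis (- (real_of_int (fst k) * fst x + real_of_int (snd k) * snd x))))
        = norm (integral\<^sup>L lborel g)" unfolding g_def set_lebesgue_integral_def ..
  also have "\<dots> \<le> integral\<^sup>L lborel (\<lambda>x. norm (g x))" by (rule integral_norm_bound)
  also have "\<dots> \<le> integral\<^sup>L lborel w" using gnint wint ng by (intro integral_mono) auto
  also have "\<dots> = (measure lborel torus_box + set_lebesgue_integral lborel torus_box (\<lambda>x. (f x)^2)) / 2"
  proof -
    have "integral\<^sup>L lborel w = integral\<^sup>L lborel (\<lambda>x. (indicator torus_box x + indicator torus_box x *\<^sub>R (f x)^2) / 2)"
      unfolding w_def by (simp add: algebra_simps)
    also have "\<dots> = (integral\<^sup>L lborel (indicator torus_box) + integral\<^sup>L lborel (\<lambda>x. indicator torus_box x *\<^sub>R (f x)^2)) / 2"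
      using torus_box_ind_int fi unfolding set_integrable_def by simp
    finally show ?thesis by (simp add: set_lebesgue_integral_def)
  qed
  finally have *: "norm (set_lebesgue_integral lborel torus_box (\<lambda>x. complex_of_real (f x) *
              cis (- (real_of_int (fst k) * fst x + real_of_int (snd k) * snd x))))
      \<le> (measure lborel torus_box + set_lebesgue_integral lborel torus_box (\<lambda>x. (f x)^2)) / 2" .
  have "norm (fcoeff f k) = (1 / (4 * pi^2)) * norm (set_lebesgue_integral lborel torus_box (\<lambda>x. complex_of_real (f x) *
              cis (- (real_of_int (fst k) * fst x + real_of_int (snd k) * snd x))))"
    unfolding fcoeff_def norm_mult norm_of_real by simp
  also have "\<dots> \<le> (1 / (4 * pi^2)) * ((measure lborel torus_box + set_lebesgue_integral lborel torus_box (\<lambda>x. (f x)^2)) / 2)"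
    by (intro mult_left_mono *) simp
  finally show ?thesis by (simp add: field_simps)
qed

lemma coeff_zero_ae:
  fixes f :: "real \<times> real \<Rightarrow> real"
  assumes "AE x in lborel. x \<in> torus_box \<longrightarrow> f x = 0"
  shows "fcoeff f k = 0"
proof -
  have "set_lebesgue_integral lborel torus_box (\<lambda>x. complex_of_real (f x) *
              cis (- (real_of_int (fst k) * fst x + real_of_int (snd k) * snd x))) = 0"
    unfolding set_lebesgue_integral_def
    by (rule integral_eq_zero_AE) (use assms in \<open>auto simp: indicator_def\<close>)
  then show ?thesis by (simp add: fcoeff_def)
qed



definition chr :: "int \<times> int \<Rightarrow> real \<times> real \<Rightarrow> complex" where
  "chr k x = cis (real_of_int (fst k) * fst x + real_of_int (snd k) * snd x)"

definition Ih :: "(real \<times> real \<Rightarrow> real) \<Rightarrow> (real \<times> real \<Rightarrow> complex) \<Rightarrow> complex" where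
  "Ih h r = integral\<^sup>L lborel (\<lambda>x. complex_of_real (h x) * r x)"

definition Zh :: "(real \<times> real \<Rightarrow> real) \<Rightarrow> (real \<times> real \<Rightarrow> complex) \<Rightarrow> bool" where
  "Zh h r \<longleftrightarrow> continuous_on UNIV r \<and> (\<forall>k. Ih h (\<lambda>x. r x * chr k x) = 0)"

lemma chr_cont: "continuous_on UNIV (chr k)"
  unfolding chr_def cis_conv_exp by (intro continuous_intros)

lemma chr_add: "chr j x * chr k x = chr (j + k) x"
  by (simp add: chr_def cis_mult algebra_simps)

lemma integ_cont:
  fixes h :: "real \<times> real \<Rightarrow> real"
  assumes hi: "integrable lborel h" and h0: "\<And>x. x \<notin> torus_box \<Longrightarrow> h x = 0"
    and rc: "continuous_on UNIV r"
  shows "integrable lborel (\<lambda>x. complex_of_real (h x) * r x)"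
proof -
  have "compact (r ` torus_box)"
    using torus_box_compact rc by (intro compact_continuous_image) (auto intro: continuous_on_subset)
  then obtain Bd where Bd: "\<And>x. x \<in> torus_box \<Longrightarrow> norm (r x) \<le> Bd"
    using compact_imp_bounded[of "r ` torus_box"] unfolding bounded_iff by auto
  have rm: "r \<in> borel_measurable borel" using rc by (rule borel_measurable_continuous_onI)
  have hm: "h \<in> borel_measurable lborel" using hi by auto
  have "integrable lborel (\<lambda>x. Bd * h x)" using hi by auto
  show ?thesis
  proof (rule Bochner_Integration.integrable_bound[OF \<open>integrable lborel (\<lambda>x. Bd * h x)\<close>])
    show "(\<lambda>x. complex_of_real (h x) * r x) \<in> borel_measurable lborel"
      using hm rm by measurable
    show "AE x in lborel. norm (complex_of_real (h x) * r x) \<le> norm (Bd * h x)"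
    proof (rule AE_I2)
      fix x show "norm (complex_of_real (h x) * r x) \<le> norm (Bd * h x)"
      proof (cases "x \<in> torus_box")
        case True
        then have "norm (r x) \<le> \<bar>Bd\<bar>" by (meson Bd abs_ge_self order_trans)
        then have "\<bar>h x\<bar> * norm (r x) \<le> \<bar>h x\<bar> * \<bar>Bd\<bar>" by (rule mult_left_mono) simp
        then show ?thesis by (simp add: norm_mult abs_mult mult.commute)
      qed (simp add: h0)
    qed
  qed
qed

lemma Zh_add:
  assumes hi: "integrable lborel h" and h0: "\<And>x. x \<notin> torus_box \<Longrightarrow> h x = 0"
    and "Zh h r" "Zh h s"
  shows "Zh h (\<lambda>x. r x + s x)"
proof -
  have rc: "continuous_on UNIV r" and sc: "continuous_on UNIV s" using assms unfolding Zh_def by auto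
  have "Ih h (\<lambda>x. (r x + s x) * chr k x) = Ih h (\<lambda>x. r x * chr k x) + Ih h (\<lambda>x. s x * chr k x)" for k
  proof -
    have i1: "integrable lborel (\<lambda>x. complex_of_real (h x) * (r x * chr k x))"
      using integ_cont[OF hi h0 continuous_on_mult[OF rc chr_cont]] by simp
    have i2: "integrable lborel (\<lambda>x. complex_of_real (h x) * (s x * chr k x))"
      using integ_cont[OF hi h0 continuous_on_mult[OF sc chr_cont]] by simp
    show ?thesis unfolding Ih_def
      using Bochner_Integration.integral_add[OF i1 i2] by (simp add: algebra_simps)
  qed
  then show ?thesis using assms unfolding Zh_def by (auto intro: continuous_intros)
qed

lemma Zh_cmult:
  assumes "Zh h r"
  shows "Zh h (\<lambda>x. c * r x)"
proof -
  have "Ih h (\<lambda>x. c * r x * chr k x) = c * Ih h (\<lambda>x. r x * chr k x)" for k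
  proof -
    have "(\<lambda>x. complex_of_real (h x) * (c * r x * chr k x)) = (\<lambda>x. c * (complex_of_real (h x) * (r x * chr k x)))"
      by (auto simp: algebra_simps)
    then show ?thesis unfolding Ih_def by simp
  qed
  then show ?thesis using assms unfolding Zh_def by (auto intro: continuous_intros)
qed

lemma Zh_chr:
  assumes "Zh h r"
  shows "Zh h (\<lambda>x. r x * chr j x)"
proof -
  have "Ih h (\<lambda>x. r x * chr j x * chr k x) = Ih h (\<lambda>x. r x * chr (j + k) x)" for k
    unfolding Ih_def by (simp add: mult.assoc chr_add)
  then show ?thesis using assms continuous_on_mult[OF _ chr_cont] unfolding Zh_def by auto
qed

lemma cos_chr: "complex_of_real (cos t) = (cis t + cis (- t)) / 2"
  by (simp add: complex_eq_iff)

lemma sin_chr: "complex_of_real (sin t) = (cis t - cis (- t)) / (2 * \<i>)"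
proof -
  have "cis t - cis (- t) = 2 * \<i> * complex_of_real (sin t)" by (simp add: complex_eq_iff)
  then show ?thesis by simp
qed

lemma Zh_cos1:
  assumes hi: "integrable lborel h" and h0: "\<And>x. x \<notin> torus_box \<Longrightarrow> h x = 0" and "Zh h r"
  shows "Zh h (\<lambda>x. r x * complex_of_real (cos (fst x)))"
proof -
  have "(\<lambda>x. r x * complex_of_real (cos (fst x))) = (\<lambda>x. (1/2) * (r x * chr (1,0) x) + (1/2) * (r x * chr (-1,0) x))"
    by (auto simp: cos_chr chr_def field_simps)
  then show ?thesis
    apply (simp only:)
    by (intro Zh_add Zh_cmult Zh_chr hi assms(3)) (simp add: h0)
qed

lemma Zh_sin1:
  assumes hi: "integrable lborel h" and h0: "\<And>x. x \<notin> torus_box \<Longrightarrow> h x = 0" and "Zh h r"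
  shows "Zh h (\<lambda>x. r x * complex_of_real (sin (fst x)))"
proof -
  have "(\<lambda>x. r x * complex_of_real (sin (fst x))) = (\<lambda>x. (1/(2*\<i>)) * (r x * chr (1,0) x) + (-1/(2*\<i>)) * (r x * chr (-1,0) x))"
    by (auto simp: sin_chr chr_def field_simps)
  then show ?thesis
    apply (simp only:)
    by (intro Zh_add Zh_cmult Zh_chr hi assms(3)) (simp add: h0)
qed

lemma Zh_cos2:
  assumes hi: "integrable lborel h" and h0: "\<And>x. x \<notin> torus_box \<Longrightarrow> h x = 0" and "Zh h r"
  shows "Zh h (\<lambda>x. r x * complex_of_real (cos (snd x)))"
proof -
  have "(\<lambda>x. r x * complex_of_real (cos (snd x))) = (\<lambda>x. (1/2) * (r x * chr (0,1) x) + (1/2) * (r x * chr (0,-1) x))"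
    by (auto simp: cos_chr chr_def field_simps)
  then show ?thesis
    apply (simp only:)
    by (intro Zh_add Zh_cmult Zh_chr hi assms(3)) (simp add: h0)
qed

lemma Zh_sin2:
  assumes hi: "integrable lborel h" and h0: "\<And>x. x \<notin> torus_box \<Longrightarrow> h x = 0" and "Zh h r"
  shows "Zh h (\<lambda>x. r x * complex_of_real (sin (snd x)))"
proof -
  have "(\<lambda>x. r x * complex_of_real (sin (snd x))) = (\<lambda>x. (1/(2*\<i>)) * (r x * chr (0,1) x) + (-1/(2*\<i>)) * (r x * chr (0,-1) x))"
    by (auto simp: sin_chr chr_def field_simps)
  then show ?thesis
    apply (simp only:)
    by (intro Zh_add Zh_cmult Zh_chr hi assms(3)) (simp add: h0)
qed

definition Emb :: "real \<times> real \<Rightarrow> (real \<times> real) \<times> (real \<times> real)" where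
  "Emb x = ((cos (fst x), sin (fst x)), (cos (snd x), sin (snd x)))"

lemma Emb_cont: "continuous_on UNIV Emb"
  unfolding Emb_def by (intro continuous_intros)

lemma lin_decomp:
  fixes p :: "(real \<times> real) \<times> (real \<times> real) \<Rightarrow> real" and a b c d :: real
  assumes "bounded_linear p"
  shows "p ((a, b), (c, d)) = a * p ((1,0),(0,0)) + b * p ((0,1),(0,0)) + c * p ((0,0),(1,0)) + d * p ((0,0),(0,1))"
proof -
  interpret p: bounded_linear p by fact
  have "((a, b), (c, d)) = a *\<^sub>R ((1,0),(0,0)) + b *\<^sub>R ((0,1),(0,0)) + c *\<^sub>R ((0,0),(1,0)) + d *\<^sub>R ((0,0),(0,1))"
    by simp
  note eq = this
  have "p ((a, b), (c, d)) = p (a *\<^sub>R ((1,0),(0,0)) + b *\<^sub>R ((0,1),(0,0)) + c *\<^sub>R ((0,0),(1,0)) + d *\<^sub>R ((0,0),(0,1)))"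
    by (simp only: flip: eq)
  also have "\<dots> = a * p ((1,0),(0,0)) + b * p ((0,1),(0,0)) + c * p ((0,0),(1,0)) + d * p ((0,0),(0,1))"
    by (simp only: p.add p.scaleR) simp
  finally show ?thesis .
qed

lemma Zh_poly:
  assumes hi: "integrable lborel h" and h0: "\<And>x. x \<notin> torus_box \<Longrightarrow> h x = 0"
    and p: "real_polynomial_function p"
  shows "\<forall>r. Zh h r \<longrightarrow> Zh h (\<lambda>x. r x * complex_of_real (p (Emb x)))"
  using p
proof (induction p rule: real_polynomial_function.induct)
  case (linear p)
  show ?case
  proof (intro allI impI)
    fix r assume r: "Zh h r"
    have "(\<lambda>x. r x * complex_of_real (p (Emb x))) =
       (\<lambda>x. complex_of_real (p ((1,0),(0,0))) * (r x * complex_of_real (cos (fst x))) +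
            complex_of_real (p ((0,1),(0,0))) * (r x * complex_of_real (sin (fst x))) +
            complex_of_real (p ((0,0),(1,0))) * (r x * complex_of_real (cos (snd x))) +
            complex_of_real (p ((0,0),(0,1))) * (r x * complex_of_real (sin (snd x))))"
    proof (rule ext)
      fix x
      have "p (Emb x) = cos (fst x) * p ((1,0),(0,0)) + sin (fst x) * p ((0,1),(0,0)) + cos (snd x) * p ((0,0),(1,0)) + sin (snd x) * p ((0,0),(0,1))"
        unfolding Emb_def by (rule lin_decomp[OF linear])
      then show "r x * complex_of_real (p (Emb x)) =
       complex_of_real (p ((1,0),(0,0))) * (r x * complex_of_real (cos (fst x))) +
            complex_of_real (p ((0,1),(0,0))) * (r x * complex_of_real (sin (fst x))) +
            complex_of_real (p ((0,0),(1,0))) * (r x * complex_of_real (cos (snd x))) +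
            complex_of_real (p ((0,0),(0,1))) * (r x * complex_of_real (sin (snd x)))"
        by (simp add: distrib_left mult_ac)
    qed
    then show "Zh h (\<lambda>x. r x * complex_of_real (p (Emb x)))"
      by (simp only:) (intro Zh_add Zh_cmult Zh_cos1 Zh_sin1 Zh_cos2 Zh_sin2 hi r; simp add: h0)
  qed
next
  case (const c)
  then show ?case using Zh_cmult[of h _ "complex_of_real c"] by (simp add: mult.commute)
next
  case (add f g)
  show ?case
  proof (intro allI impI)
    fix r assume r: "Zh h r"
    have "(\<lambda>x. r x * complex_of_real (f (Emb x) + g (Emb x))) =
       (\<lambda>x. r x * complex_of_real (f (Emb x)) + r x * complex_of_real (g (Emb x)))"
      by (auto simp: algebra_simps)
    then show "Zh h (\<lambda>x. r x * complex_of_real (f (Emb x) + g (Emb x)))"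
      using add.IH r by (simp only:) (intro Zh_add hi; simp add: h0)
  qed
next
  case (mult f g)
  show ?case
  proof (intro allI impI)
    fix r assume r: "Zh h r"
    have "(\<lambda>x. r x * complex_of_real (f (Emb x) * g (Emb x))) =
       (\<lambda>x. (r x * complex_of_real (f (Emb x))) * complex_of_real (g (Emb x)))"
      by (auto simp: algebra_simps)
    then show "Zh h (\<lambda>x. r x * complex_of_real (f (Emb x) * g (Emb x)))"
      using mult.IH r by simp
  qed
qed



lemma integ_cont_real:
  fixes h :: "real \<times> real \<Rightarrow> real"
  assumes hi: "integrable lborel h" and h0: "\<And>x. x \<notin> torus_box \<Longrightarrow> h x = 0"
    and rc: "continuous_on UNIV r"
  shows "integrable lborel (\<lambda>x. h x * r x)"
proof -
  have "integrable lborel (\<lambda>x. complex_of_real (h x) * complex_of_real (r x))"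
    using integ_cont[OF hi h0, of "\<lambda>x. complex_of_real (r x)"] rc by simp
  then have "integrable lborel (\<lambda>x. complex_of_real (h x * r x))" by (simp only: of_real_mult)
  then show ?thesis by (simp only: complex_of_real_integrable_eq)
qed

lemma Ih_cont_zero:
  fixes h :: "real \<times> real \<Rightarrow> real" and \<psi> :: "(real \<times> real) \<times> (real \<times> real) \<Rightarrow> real"
  assumes hi: "integrable lborel h" and h0: "\<And>x. x \<notin> torus_box \<Longrightarrow> h x = 0"
    and Z1: "Zh h (\<lambda>x. 1)" and \<psi>c: "continuous_on UNIV \<psi>"
  shows "integral\<^sup>L lborel (\<lambda>x. h x * \<psi> (Emb x)) = 0"
proof -
  define A where "A = integral\<^sup>L lborel (\<lambda>x. \<bar>h x\<bar>)"
  have A0: "0 \<le> A" unfolding A_def by simp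
  have S: "compact (Emb ` torus_box)"
    using torus_box_compact Emb_cont by (intro compact_continuous_image) (auto intro: continuous_on_subset)
  have \<psi>E: "continuous_on UNIV (\<lambda>x. \<psi> (Emb x))"
    by (rule continuous_on_compose2[OF \<psi>c Emb_cont]) simp
  have bnd: "\<bar>integral\<^sup>L lborel (\<lambda>x. h x * \<psi> (Emb x))\<bar> \<le> e * A" if e: "e > 0" for e
  proof -
    obtain p where p: "real_polynomial_function p" and pe: "\<And>y. y \<in> Emb ` torus_box \<Longrightarrow> \<bar>\<psi> y - p y\<bar> < e"
      using Stone_Weierstrass_real_polynomial_function[OF S continuous_on_subset[OF \<psi>c] e] by blast
    have pc: "continuous_on UNIV p"
      using continuous_real_polymonial_function[OF p] continuous_at_imp_continuous_on by blast
    have pE: "continuous_on UNIV (\<lambda>x. p (Emb x))"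
      by (rule continuous_on_compose2[OF pc Emb_cont]) simp
    have "Zh h (\<lambda>x. 1 * complex_of_real (p (Emb x)))"
      using Zh_poly[OF hi h0 p] Z1 by blast
    then have "Ih h (\<lambda>x. 1 * complex_of_real (p (Emb x)) * chr 0 x) = 0"
      unfolding Zh_def by blast
    then have "integral\<^sup>L lborel (\<lambda>x. complex_of_real (h x) * complex_of_real (p (Emb x))) = 0"
      unfolding Ih_def by (simp add: chr_def)
    then have "integral\<^sup>L lborel (\<lambda>x. complex_of_real (h x * p (Emb x))) = 0"
      by (simp only: of_real_mult)
    then have p0: "integral\<^sup>L lborel (\<lambda>x. h x * p (Emb x)) = 0"
      by (simp only: integral_complex_of_real of_real_eq_0_iff)
    have i1: "integrable lborel (\<lambda>x. h x * \<psi> (Emb x))" by (rule integ_cont_real[OF hi h0 \<psi>E])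
    have i2: "integrable lborel (\<lambda>x. h x * p (Emb x))" by (rule integ_cont_real[OF hi h0 pE])
    have "integral\<^sup>L lborel (\<lambda>x. h x * \<psi> (Emb x)) = integral\<^sup>L lborel (\<lambda>x. h x * \<psi> (Emb x) - h x * p (Emb x))"
      using Bochner_Integration.integral_diff[OF i1 i2] p0 by simp
    also have "\<bar>\<dots>\<bar> \<le> integral\<^sup>L lborel (\<lambda>x. e * \<bar>h x\<bar>)"
    proof -
      have "\<bar>integral\<^sup>L lborel (\<lambda>x. h x * \<psi> (Emb x) - h x * p (Emb x))\<bar>
          \<le> integral\<^sup>L lborel (\<lambda>x. norm (h x * \<psi> (Emb x) - h x * p (Emb x)))"
        using integral_norm_bound[of lborel "\<lambda>x. h x * \<psi> (Emb x) - h x * p (Emb x)"] by simp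
      also have "\<dots> \<le> integral\<^sup>L lborel (\<lambda>x. e * \<bar>h x\<bar>)"
      proof (rule integral_mono)
        show "integrable lborel (\<lambda>x. norm (h x * \<psi> (Emb x) - h x * p (Emb x)))"
          using i1 i2 by auto
        show "integrable lborel (\<lambda>x. e * \<bar>h x\<bar>)" using hi by auto
        fix x
        show "norm (h x * \<psi> (Emb x) - h x * p (Emb x)) \<le> e * \<bar>h x\<bar>"
        proof (cases "x \<in> torus_box")
          case True
          then have "\<bar>\<psi> (Emb x) - p (Emb x)\<bar> \<le> e" using pe[of "Emb x"] by auto
          then have "\<bar>h x\<bar> * \<bar>\<psi> (Emb x) - p (Emb x)\<bar> \<le> \<bar>h x\<bar> * e" by (rule mult_left_mono) simp
          then show ?thesis by (simp add: right_diff_distrib[symmetric] abs_mult mult.commute)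
        qed (simp add: h0)
      qed
      finally show ?thesis .
    qed
    also have "\<dots> = e * A" unfolding A_def by simp
    finally show ?thesis .
  qed
  show ?thesis
  proof (rule ccontr)
    assume ne: "integral\<^sup>L lborel (\<lambda>x. h x * \<psi> (Emb x)) \<noteq> 0"
    define I where "I = \<bar>integral\<^sup>L lborel (\<lambda>x. h x * \<psi> (Emb x))\<bar>"
    have I0: "I > 0" using ne unfolding I_def by simp
    have "I \<le> (I / (2 * (A + 1))) * A" unfolding I_def
      using bnd[of "I / (2 * (A + 1))"] I0 A0 unfolding I_def by simp
    also have "\<dots> < I"
      using I0 A0 by (simp add: field_simps) (smt (verit) mult_nonneg_nonneg)
    finally show False by simp
  qed
qed



lemma mem_box_pair:
  "x \<in> box (a1, a2) (b1, b2) \<longleftrightarrow> a1 < fst x \<and> fst x < (b1::real) \<and> a2 < snd x \<and> snd x < (b2::real)"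
  by (cases x) (auto simp: mem_box Basis_prod_def)

lemma mem_torus_box:
  "x \<in> torus_box \<longleftrightarrow> 0 \<le> fst x \<and> fst x \<le> 2*pi \<and> 0 \<le> snd x \<and> snd x \<le> 2*pi"
  by (cases x) (auto simp: torus_box_def)

lemma arc_iff:
  fixes l u x :: real
  assumes "0 \<le> l" "l < u" "u \<le> 2*pi" "0 \<le> x" "x \<le> 2*pi"
  shows "cos (x - (l+u)/2) > cos ((u-l)/2) \<longleftrightarrow> l < x \<and> x < u"
proof -
  define c where "c = (l+u)/2"
  define r where "r = (u-l)/2"
  define d where "d = \<bar>x - c\<bar>"
  have r0: "0 < r" and rpi: "r \<le> pi" using assms unfolding r_def by auto
  have cd: "cos (x - c) = cos d" unfolding d_def by (metis abs_minus_commute abs_of_nonneg cos_minus minus_diff_eq abs_ge_zero abs_if)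
  have d0: "0 \<le> d" unfolding d_def by simp
  have d2: "d \<le> 2*pi - r" using assms unfolding d_def c_def r_def by (auto simp: abs_if field_simps)
  show ?thesis
  proof
    assume "l < x \<and> x < u"
    then have "d < r" unfolding d_def c_def r_def by (auto simp: abs_if field_simps)
    then have "cos r < cos d" using cos_monotone_0_pi[OF d0 _ rpi] by auto
    then show "cos (x - (l+u)/2) > cos ((u-l)/2)" using cd unfolding c_def r_def by simp
  next
    assume a: "cos (x - (l+u)/2) > cos ((u-l)/2)"
    show "l < x \<and> x < u"
    proof (rule ccontr)
      assume "\<not> (l < x \<and> x < u)"
      then have dr: "r \<le> d" unfolding d_def c_def r_def by (auto simp: abs_if field_simps)
      have "cos d \<le> cos r"
      proof (cases "d \<le> pi")
        case True then show ?thesis using cos_monotone_0_pi_le[OF _ dr True] r0 by auto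
      next
        case False
        have "cos d = cos (2*pi - d)" by (simp add: cos_diff)
        also have "\<dots> \<le> cos r" using cos_monotone_0_pi_le[of r "2*pi - d"] False d2 r0 by auto
        finally show ?thesis .
      qed
      then show False using a cd unfolding c_def r_def by simp
    qed
  qed
qed

lemma G_lim: "(\<lambda>n. min 1 (real n * max 0 s)) \<longlonglongrightarrow> (if s > 0 then 1 else 0::real)"
proof (cases "s > 0")
  case True
  obtain N where N: "1 / s < real N" using reals_Archimedean2 by blast
  have "eventually (\<lambda>n. min 1 (real n * max 0 s) = 1) sequentially"
    unfolding eventually_sequentially
  proof (intro exI allI impI)
    fix n assume "N \<le> n"
    then have "1 / s < real n" using N by (meson le_less_trans not_le of_nat_le_iff order.strict_trans1)
    then have "1 \<le> real n * s" using True by (simp add: field_simps)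
    then show "min 1 (real n * max 0 s) = 1" using True by simp
  qed
  then show ?thesis using True by (simp add: tendsto_eventually)
next
  case False then show ?thesis by simp
qed

lemma box_zero:
  fixes h :: "real \<times> real \<Rightarrow> real"
  assumes hi: "integrable lborel h" and h0: "\<And>x. x \<notin> torus_box \<Longrightarrow> h x = 0"
    and Z1: "Zh h (\<lambda>x. 1)"
    and l1: "0 \<le> l1" "l1 < u1" "u1 \<le> 2*pi" and l2: "0 \<le> l2" "l2 < u2" "u2 \<le> 2*pi"
  shows "integral\<^sup>L lborel (\<lambda>x. indicator (box (l1, l2) (u1, u2)) x * h x) = 0"
proof -
  define c1 where "c1 = (l1+u1)/2"
  define r1 where "r1 = (u1-l1)/2"
  define c2 where "c2 = (l2+u2)/2"
  define r2 where "r2 = (u2-l2)/2"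
  define G :: "nat \<Rightarrow> real \<Rightarrow> real" where "G n s = min 1 (real n * max 0 s)" for n s
  define \<psi> :: "nat \<Rightarrow> (real \<times> real) \<times> (real \<times> real) \<Rightarrow> real" where
    "\<psi> n y = G n (fst (fst y) * cos c1 + snd (fst y) * sin c1 - cos r1) *
              G n (fst (snd y) * cos c2 + snd (snd y) * sin c2 - cos r2)" for n y
  define s where "s n x = h x * \<psi> n (Emb x)" for n x
  define H where "H x = (if cos (fst x - c1) - cos r1 > 0 then 1 else 0) * (if cos (snd x - c2) - cos r2 > 0 then 1 else (0::real))" for x
  have \<psi>c: "continuous_on UNIV (\<psi> n)" for n
    unfolding \<psi>_def G_def by (intro continuous_intros)
  have s0: "integral\<^sup>L lborel (s n) = 0" for n
    unfolding s_def by (rule Ih_cont_zero[OF hi h0 Z1 \<psi>c])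
  have sE: "s n x = h x * (G n (cos (fst x - c1) - cos r1) * G n (cos (snd x - c2) - cos r2))" for n x
    unfolding s_def \<psi>_def Emb_def by (simp add: cos_diff)
  have G01: "\<bar>G n t\<bar> \<le> 1" for n t unfolding G_def by auto
  have hm: "h \<in> borel_measurable lborel" using hi by auto
  have Hind: "h x * H x = indicator (box (l1, l2) (u1, u2)) x * h x" for x
  proof (cases "x \<in> torus_box")
    case True
    then have x: "0 \<le> fst x" "fst x \<le> 2*pi" "0 \<le> snd x" "snd x \<le> 2*pi" by (auto simp: mem_torus_box)
    have e1: "cos (fst x - c1) - cos r1 > 0 \<longleftrightarrow> l1 < fst x \<and> fst x < u1"
      using arc_iff[OF l1 x(1,2)] unfolding c1_def r1_def by simp
    have e2: "cos (snd x - c2) - cos r2 > 0 \<longleftrightarrow> l2 < snd x \<and> snd x < u2"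
      using arc_iff[OF l2 x(3,4)] unfolding c2_def r2_def by simp
    have "H x = indicator (box (l1, l2) (u1, u2)) x"
      unfolding H_def indicator_def mem_box_pair e1 e2 by simp
    then show ?thesis by (simp add: mult.commute)
  next
    case False
    then have "x \<notin> box (l1, l2) (u1, u2)" using l1 l2 by (auto simp: mem_box_pair mem_torus_box)
    then show ?thesis using h0[OF False] by simp
  qed
  have lim: "(\<lambda>n. integral\<^sup>L lborel (s n)) \<longlonglongrightarrow> integral\<^sup>L lborel (\<lambda>x. h x * H x)"
  proof (rule integral_dominated_convergence[where w = "\<lambda>x. \<bar>h x\<bar>"])
    show "(\<lambda>x. h x * H x) \<in> borel_measurable lborel"
      unfolding Hind using hm by measurable
    show "s n \<in> borel_measurable lborel" for n
      using integ_cont_real[OF hi h0 continuous_on_compose2[OF \<psi>c Emb_cont]] unfolding s_def by auto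
    show "integrable lborel (\<lambda>x. \<bar>h x\<bar>)" using hi by auto
    show "AE x in lborel. (\<lambda>n. s n x) \<longlonglongrightarrow> h x * H x"
    proof (rule AE_I2)
      fix x
      have "(\<lambda>n. G n (cos (fst x - c1) - cos r1) * G n (cos (snd x - c2) - cos r2)) \<longlonglongrightarrow> H x"
        unfolding H_def G_def by (intro tendsto_mult G_lim)
      then show "(\<lambda>n. s n x) \<longlonglongrightarrow> h x * H x" unfolding sE by (intro tendsto_mult tendsto_const)
    qed
    show "AE x in lborel. norm (s n x) \<le> \<bar>h x\<bar>" for n
    proof (rule AE_I2)
      fix x
      have "\<bar>G n (cos (fst x - c1) - cos r1) * G n (cos (snd x - c2) - cos r2)\<bar> \<le> 1"
        using G01 by (simp add: abs_mult mult_le_one)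
      then have "\<bar>h x\<bar> * \<bar>G n (cos (fst x - c1) - cos r1) * G n (cos (snd x - c2) - cos r2)\<bar> \<le> \<bar>h x\<bar> * 1"
        by (rule mult_left_mono) simp
      then show "norm (s n x) \<le> \<bar>h x\<bar>" unfolding sE by (simp add: abs_mult)
    qed
  qed
  then have "integral\<^sup>L lborel (\<lambda>x. h x * H x) = 0"
  proof -
    have "(\<lambda>n. integral\<^sup>L lborel (s n)) = (\<lambda>n. 0)" using s0 by simp
    then show ?thesis using lim LIMSEQ_unique[OF tendsto_const] by metis
  qed
  then show ?thesis unfolding Hind .
qed



lemma ae_zero_from_boxes:
  fixes g :: "real \<times> real \<Rightarrow> real"
  assumes gi: "integrable lborel g"
    and gb: "\<And>l1 l2 u1 u2. 0 \<le> l1 \<Longrightarrow> l1 < u1 \<Longrightarrow> u1 \<le> 2*pi \<Longrightarrow> 0 \<le> l2 \<Longrightarrow> l2 < u2 \<Longrightarrow> u2 \<le> 2*pi \<Longrightarrow>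
          integral\<^sup>L lborel (\<lambda>x. indicator (box (l1, l2) (u1, u2)) x * g x) = 0"
    and g0: "\<And>x. x \<notin> box (0, 0) (2*pi, 2*pi) \<Longrightarrow> g x = 0"
  shows "AE x in lborel. g x = 0"
proof (rule sigma_finite_measure.density_zero[OF sigma_finite_lborel gi])
  have boxes0: "integral\<^sup>L lborel (\<lambda>x. indicator (box a b) x * g x) = 0" for a b :: "real \<times> real"
  proof -
    obtain a1 a2 b1 b2 where ab: "a = (a1, a2)" "b = (b1, b2)" by (cases a, cases b)
    define l1 where "l1 = max a1 0"
    define l2 where "l2 = max a2 0"
    define u1 where "u1 = min b1 (2*pi)"
    define u2 where "u2 = min b2 (2*pi)"
    have eq: "indicator (box a b) x * g x = indicator (box (l1, l2) (u1, u2)) x * g x" for x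
    proof (cases "x \<in> box (0, 0) (2*pi, 2*pi)")
      case True
      then have "x \<in> box a b \<longleftrightarrow> x \<in> box (l1, l2) (u1, u2)"
        unfolding ab mem_box_pair l1_def l2_def u1_def u2_def by auto
      then show ?thesis by (simp add: indicator_def)
    next
      case False then show ?thesis using g0 by simp
    qed
    show ?thesis
    proof (cases "l1 < u1 \<and> l2 < u2")
      case True
      then show ?thesis unfolding eq
        by (intro gb) (auto simp: l1_def l2_def u1_def u2_def)
    next
      case False
      then have "box (l1, l2) (u1, u2) = {}" by (auto simp: mem_box_pair)
      then show ?thesis unfolding eq by simp
    qed
  qed
  have whole: "integral\<^sup>L lborel g = 0"
  proof -
    have "integral\<^sup>L lborel g = integral\<^sup>L lborel (\<lambda>x. indicator (box (0, 0) (2*pi, 2*pi)) x * g x)"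
      by (rule Bochner_Integration.integral_cong) (auto simp: indicator_def g0)
    then show ?thesis using boxes0 by simp
  qed
  fix A :: "(real \<times> real) set" assume A: "A \<in> sets lborel"
  have "Int_stable (range (\<lambda>(a, b). box a b :: (real \<times> real) set))"
    by (auto simp: Int_stable_def box_Int_box)
  moreover have "(range (\<lambda>(a, b). box a b :: (real \<times> real) set)) \<subseteq> Pow UNIV"
    by auto
  moreover have "A \<in> sigma_sets UNIV (range (\<lambda>(a, b). box a b :: (real \<times> real) set))"
    using A unfolding sets_lborel borel_eq_box by simp
  ultimately have "integral\<^sup>L lborel (\<lambda>x. indicator A x * g x) = 0"
  proof (induction rule: sigma_sets_induct_disjoint)
    case (basic A) then show ?case using boxes0 by auto
  next
    case empty then show ?case by simp
  next
    case (compl A)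
    then have [measurable]: "A \<in> sets borel"
      by (simp add: borel_eq_box)
    have i1: "integrable lborel (\<lambda>x. indicator A x * g x)"
      using integrable_mult_indicator[of A lborel g] gi by simp
    have "integral\<^sup>L lborel (\<lambda>x. indicator (UNIV - A) x * g x) = integral\<^sup>L lborel (\<lambda>x. g x - indicator A x * g x)"
      by (rule Bochner_Integration.integral_cong) (auto simp: indicator_def)
    also have "\<dots> = integral\<^sup>L lborel g - integral\<^sup>L lborel (\<lambda>x. indicator A x * g x)"
      using Bochner_Integration.integral_diff[OF gi i1] by simp
    finally show ?case using compl whole by simp
  next
    case (union F)
    then have [measurable]: "\<And>i. F i \<in> sets borel"
      by (simp add: borel_eq_box subset_eq)
    have "(LINT x:(\<Union>i. F i)|lborel. g x) = (\<Sum>i. (LINT x:(F i)|lborel. g x))"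
    proof (rule lebesgue_integral_countable_add)
      show "F i \<in> sets lborel" for i by simp
      show "F i \<inter> F j = {}" if "i \<noteq> j" for i j using union(1) that by (auto simp: disjoint_family_on_def)
      show "set_integrable lborel (\<Union>i. F i) g"
        unfolding set_integrable_def using gi by (intro integrable_mult_indicator) auto
    qed
    also have "\<dots> = 0" using union by (simp add: set_lebesgue_integral_def)
    finally show ?case by (simp add: set_lebesgue_integral_def)
  qed
  then show "set_lebesgue_integral lborel A g = 0" by (simp add: set_lebesgue_integral_def)
qed



lemma hb_int:
  fixes f :: "real \<times> real \<Rightarrow> real"
  assumes fm[measurable]: "f \<in> borel_measurable borel"
    and fi: "set_integrable lborel torus_box (\<lambda>x. (f x)^2)"
  shows "integrable lborel (\<lambda>x. indicator torus_box x * f x)"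
proof -
  define w where "w x = indicator torus_box x * ((1 + (f x)^2) / 2)" for x
  have wint: "integrable lborel w"
  proof -
    have "integrable lborel (\<lambda>x. (indicator torus_box x + indicator torus_box x *\<^sub>R (f x)^2) / 2)"
      using torus_box_ind_int fi unfolding set_integrable_def by auto
    then show ?thesis unfolding w_def by (simp add: algebra_simps)
  qed
  have ng: "norm (indicator torus_box x * f x) \<le> w x" for x
  proof -
    have "\<bar>f x\<bar> \<le> (1 + (f x)^2) / 2"
    proof -
      have "0 \<le> (\<bar>f x\<bar> - 1)^2" by simp
      then have "0 \<le> \<bar>f x\<bar>^2 - 2 * \<bar>f x\<bar> + 1" by (simp add: power2_diff)
      then show ?thesis by simp
    qed
    then show ?thesis unfolding w_def by (auto simp: indicator_def)
  qed
  show ?thesis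
    using Bochner_Integration.integrable_bound[OF wint, of "\<lambda>x. indicator torus_box x * f x"] ng
    by (auto intro!: AE_I2 simp: w_def indicator_def)
qed

lemma fourier_unique:
  fixes f :: "real \<times> real \<Rightarrow> real"
  assumes fm[measurable]: "f \<in> borel_measurable borel"
    and fi: "set_integrable lborel torus_box (\<lambda>x. (f x)^2)"
    and fz: "\<forall>k. fcoeff f k = 0"
  shows "AE x in lborel. x \<in> torus_box \<longrightarrow> f x = 0"
proof -
  define h where "h x = indicator torus_box x * f x" for x
  have hi: "integrable lborel h" unfolding h_def by (rule hb_int[OF fm fi])
  have h0: "h x = 0" if "x \<notin> torus_box" for x using that unfolding h_def by simp
  have Z1: "Zh h (\<lambda>x. 1)"
    unfolding Zh_def
  proof (intro conjI allI)
    show "continuous_on UNIV (\<lambda>x::real\<times>real. 1::complex)" by simp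
    fix k :: "int \<times> int"
    have eq: "(\<lambda>x. indicator torus_box x *\<^sub>R (complex_of_real (f x) *
              cis (- (real_of_int (fst (-k)) * fst x + real_of_int (snd (-k)) * snd x))))
            = (\<lambda>x. complex_of_real (h x) * (1 * chr k x))"
      by (rule ext) (simp add: h_def chr_def indicator_def add.commute)
    have "0 = fcoeff f (-k)" using fz by metis
    also have "\<dots> = complex_of_real (1 / (4 * pi^2)) * Ih h (\<lambda>x. 1 * chr k x)"
      unfolding fcoeff_def set_lebesgue_integral_def Ih_def eq ..
    finally show "Ih h (\<lambda>x. 1 * chr k x) = 0" by simp
  qed
  define g where "g x = indicator (box (0, 0) (2*pi, 2*pi)) x * f x" for x
  have sub: "box (0, 0) (2*pi, 2*pi) \<subseteq> torus_box"
    by (auto simp: mem_box_pair mem_torus_box)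
  have gh: "g x = indicator (box (0, 0) (2*pi, 2*pi)) x * h x" for x
    using sub unfolding g_def h_def by (auto simp: indicator_def)
  have gi: "integrable lborel g"
    unfolding gh using integrable_mult_indicator[OF _ hi, of "box (0, 0) (2*pi, 2*pi)"] by simp
  have "AE x in lborel. g x = 0"
  proof (rule ae_zero_from_boxes[OF gi])
    fix l1 l2 u1 u2 :: real
    assume l: "0 \<le> l1" "l1 < u1" "u1 \<le> 2*pi" "0 \<le> l2" "l2 < u2" "u2 \<le> 2*pi"
    have "integral\<^sup>L lborel (\<lambda>x. indicator (box (l1, l2) (u1, u2)) x * g x)
        = integral\<^sup>L lborel (\<lambda>x. indicator (box (l1, l2) (u1, u2)) x * h x)"
    proof (rule Bochner_Integration.integral_cong)
      fix x
      show "indicator (box (l1, l2) (u1, u2)) x * g x = indicator (box (l1, l2) (u1, u2)) x * h x"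
      proof (cases "x \<in> box (l1, l2) (u1, u2)")
        case True
        then have "x \<in> box (0, 0) (2*pi, 2*pi)" using l by (auto simp: mem_box_pair)
        then show ?thesis unfolding gh by simp
      qed simp
    qed simp
    also have "\<dots> = 0" by (rule box_zero[OF hi h0 Z1 l])
    finally show "integral\<^sup>L lborel (\<lambda>x. indicator (box (l1, l2) (u1, u2)) x * g x) = 0" .
  next
    fix x assume "x \<notin> box (0, 0) (2*pi, 2*pi)"
    then show "g x = 0" unfolding g_def by simp
  qed
  moreover have "AE x in lborel. x \<notin> torus_box - box (0, 0) (2*pi, 2*pi)"
  proof (rule AE_not_in)
    have fin: "emeasure lborel (box (0, 0) (2*pi, 2*pi)) \<noteq> \<infinity>"
      by (simp add: emeasure_lborel_box_eq)
    have "emeasure lborel (torus_box - box (0, 0) (2*pi, 2*pi))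
        = emeasure lborel torus_box - emeasure lborel (box (0, 0) (2*pi, 2*pi))"
      using sub fin by (intro emeasure_Diff) auto
    also have "\<dots> = 0"
      unfolding torus_box_cbox emeasure_lborel_cbox_eq emeasure_lborel_box_eq by simp
    finally show "torus_box - box (0, 0) (2*pi, 2*pi) \<in> null_sets lborel"
      by (intro null_setsI) auto
  qed
  ultimately show ?thesis
  proof eventually_elim
    case (elim x)
    show ?case
    proof
      assume "x \<in> torus_box"
      then have "x \<in> box (0, 0) (2*pi, 2*pi)" using elim by auto
      then show "f x = 0" using elim unfolding g_def by simp
    qed
  qed
qed



theorem proposition2p5:
  fixes a :: int and \<beta> T :: real and \<rho> :: "real \<Rightarrow> real \<times> real \<Rightarrow> real"
  assumes beta_pos: "0 < \<beta>" and beta_le: "\<beta> \<le> 2" and T_pos: "0 < T"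
    and meas: "(\<lambda>(t, x). \<rho> t x) \<in> borel_measurable borel"
    and Linf_L2: "\<exists>M. \<forall>t\<in>{0<..<T}.
                    set_integrable lborel torus_box (\<lambda>x. (\<rho> t x)^2) \<and>
                    set_lebesgue_integral lborel torus_box (\<lambda>x. (\<rho> t x)^2) \<le> M"
    and init: "AE x in lborel. x \<in> torus_box \<longrightarrow> \<rho> 0 x = 0"
    and eqn: "\<forall>k. \<forall>t\<in>{0<..<T}.
                fcoeff (\<rho> t) k - fcoeff (\<rho> 0) k =
                set_lebesgue_integral lborel {0..t} (\<lambda>s. L_hat a \<beta> (fcoeff (\<rho> s)) k)"
  shows "\<forall>t\<in>{0<..<T}. AE x in lborel. x \<in> torus_box \<longrightarrow> \<rho> t x = 0"
proof -
  obtain M where M: "\<And>t. t \<in> {0<..<T} \<Longrightarrow> set_integrable lborel torus_box (\<lambda>x. (\<rho> t x)^2) \<and>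
                    set_lebesgue_integral lborel torus_box (\<lambda>x. (\<rho> t x)^2) \<le> M"
    using Linf_L2 by blast
  have rm: "(\<lambda>x. \<rho> t x) \<in> borel_measurable borel" for t
  proof -
    have "(\<lambda>x::real\<times>real. (t, x)) \<in> borel \<rightarrow>\<^sub>M borel"
      by (intro borel_measurable_continuous_onI continuous_intros)
    from measurable_compose[OF this meas] show ?thesis by simp
  qed
  have C0: "\<forall>k. fcoeff (\<rho> 0) k = 0" using coeff_zero_ae[OF init] by blast
  define B where "B = (measure lborel torus_box + max M 0) / (8 * pi^2)"
  have B0: "0 \<le> B" unfolding B_def by simp
  have bnd: "\<forall>s\<in>{0..<T}. \<forall>k. norm (fcoeff (\<rho> s) k) \<le> B"
  proof (intro ballI allI)
    fix s k assume s: "s \<in> {0..<T}"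
    show "norm (fcoeff (\<rho> s) k) \<le> B"
    proof (cases "s = 0")
      case True then show ?thesis using C0 B0 by (metis norm_zero)
    next
      case False
      then have s': "s \<in> {0<..<T}" using s by auto
      have "norm (fcoeff (\<rho> s) k) \<le> (measure lborel torus_box + set_lebesgue_integral lborel torus_box (\<lambda>x. (\<rho> s x)^2)) / (8*pi^2)"
        by (rule coeff_bound[OF rm]) (use M[OF s'] in blast)
      also have "\<dots> \<le> B" unfolding B_def using M[OF s']
        by (intro divide_right_mono) auto
      finally show ?thesis .
    qed
  qed
  have eqn': "\<forall>k. \<forall>t\<in>{0<..<T}. fcoeff (\<rho> t) k = set_lebesgue_integral lborel {0..t} (\<lambda>s. L_hat a \<beta> (fcoeff (\<rho> s)) k)"
    using eqn C0 by simp
  have Z: "\<forall>t\<in>{0..<T}. \<forall>k. fcoeff (\<rho> t) k = 0"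
    by (rule ode_zero[OF beta_le bnd C0 eqn'])
  show ?thesis
  proof
    fix t assume t: "t \<in> {0<..<T}"
    show "AE x in lborel. x \<in> torus_box \<longrightarrow> \<rho> t x = 0"
      by (rule fourier_unique[OF rm]) (use M[OF t] Z t in auto)
  qed
qed


end
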